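(* Assume Assumption 1, Assumption 2 and the null hypothesis $H_0:\ T_i(1)=T_i(0)$ for all $i$, and condition on $\boldsymbol{T}(1),\boldsymbol{T}(0)$. Then for any time $t\ge 0$ and integers $A,B$, $$\Pr\{\overline{D}_1(t)=A,\overline{N}_1(t)=B\mid\boldsymbol{T}(1),\boldsymbol{T}(0),\Delta_i\mathbb{1}(W_i=t),\mathbb{1}(W_i\ge t),1\le i\le n\}=\binom{\overline{D}(t)}{A}\binom{\overline{N}(t)-\overline{D}(t)}{B-A}\{\phi(t)\}^B\{1-\phi(t)\}^{\overline{N}(t)-B}.$$
   Context: There are $n$ units. Unit $i$ has potential event times $T_i(1),T_i(0)\ge 0$, potential censoring times $C_i(1),C_i(0)\in[0,\infty]$, and treatment indicator $Z_i\in\{0,1\}$; bold letters denote $n$-vectors. Assumption 1: conditional on $\boldsymbol{T}(1),\boldsymbol{T}(0),\boldsymbol{C}(1),\boldsymbol{C}(0)$, the $Z_i$ are i.i.d. Bernoulli$(p_1)$, $p_1=1-p_0\in(0,1)$. Assumption 2: $(\boldsymbol{C}(1),\boldsymbol{C}(0))$ is independent of $(\boldsymbol{T}(1),\boldsymbol{T}(0))$ and the pairs $(C_i(1),C_i(0))$ are i.i.d. across $i$. $G_z(c)=\Pr(C_i(z)\ge c)$, $\phi(t)=p_1G_1(t)/\{p_1G_1(t)+p_0G_0(t)\}$. Realized: $T_i=Z_iT_i(1)+(1-Z_i)T_i(0)$, $C_i=Z_iC_i(1)+(1-Z_i)C_i(0)$, $W_i=\min\{T_i,C_i\}$, $\Delta_i=\mathbb{1}(T_i\le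 C_i)$. $\overline{N}_1(t)=\sum_iZ_i\mathbb{1}(W_i\ge t)$, $\overline{N}(t)=\sum_i\mathbb{1}(W_i\ge t)$, $\overline{D}_1(t)=\sum_iZ_i\Delta_i\mathbb{1}(W_i=t)$, $\overline{D}(t)=\sum_i\Delta_i\mathbb{1}(W_i=t)$. Binomial coefficients $\binom{a}{b}$ are $0$ when $b<0$ or $b>a$. *)

theory Defs
  imports "HOL-Probability.Probability"
begin

(* Potential event times T1 i, T0 i are fixed reals
   (we condition on them); censoring times are ennreal-valued random variables (values in [0,\<infinity>]);
   Z i \<omega> = True encodes Z_i = 1. *)

definition Tobs :: "(nat \<Rightarrow> real) \<Rightarrow> (nat \<Rightarrow> real) \<Rightarrow> (nat \<Rightarrow> 'a \<Rightarrow> bool) \<Rightarrow> nat \<Rightarrow> 'a \<Rightarrow> real" where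
  "Tobs T1 T0 Z i \<omega> = (if Z i \<omega> then T1 i else T0 i)"

definition Cobs :: "(nat \<Rightarrow> 'a \<Rightarrow> ennreal) \<Rightarrow> (nat \<Rightarrow> 'a \<Rightarrow> ennreal) \<Rightarrow> (nat \<Rightarrow> 'a \<Rightarrow> bool) \<Rightarrow> nat \<Rightarrow> 'a \<Rightarrow> ennreal" where
  "Cobs C1 C0 Z i \<omega> = (if Z i \<omega> then C1 i \<omega> else C0 i \<omega>)"

definition Wobs :: "(nat \<Rightarrow> real) \<Rightarrow> (nat \<Rightarrow> real) \<Rightarrow> (nat \<Rightarrow> 'a \<Rightarrow> ennreal) \<Rightarrow> (nat \<Rightarrow> 'a \<Rightarrow> ennreal) \<Rightarrow> (nat \<Rightarrow> 'a \<Rightarrow> bool) \<Rightarrow> nat \<Rightarrow> 'a \<Rightarrow> ennreal" where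
  "Wobs T1 T0 C1 C0 Z i \<omega> = min (ennreal (Tobs T1 T0 Z i \<omega>)) (Cobs C1 C0 Z i \<omega>)"

definition Dobs :: "(nat \<Rightarrow> real) \<Rightarrow> (nat \<Rightarrow> real) \<Rightarrow> (nat \<Rightarrow> 'a \<Rightarrow> ennreal) \<Rightarrow> (nat \<Rightarrow> 'a \<Rightarrow> ennreal) \<Rightarrow> (nat \<Rightarrow> 'a \<Rightarrow> bool) \<Rightarrow> nat \<Rightarrow> 'a \<Rightarrow> bool" where
  "Dobs T1 T0 C1 C0 Z i \<omega> = (ennreal (Tobs T1 T0 Z i \<omega>) \<le> Cobs C1 C0 Z i \<omega>)"

definition obs_ind :: "(nat \<Rightarrow> real) \<Rightarrow> (nat \<Rightarrow> real) \<Rightarrow> (nat \<Rightarrow> 'a \<Rightarrow> ennreal) \<Rightarrow> (nat \<Rightarrow> 'a \<Rightarrow> ennreal) \<Rightarrow> (nat \<Rightarrow> 'a \<Rightarrow> bool) \<Rightarrow> real \<Rightarrow> nat \<Rightarrow> 'a \<Rightarrow> bool \<times> bool" where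
  "obs_ind T1 T0 C1 C0 Z t i \<omega> =
     (Dobs T1 T0 C1 C0 Z i \<omega> \<and> Wobs T1 T0 C1 C0 Z i \<omega> = ennreal t,
      Wobs T1 T0 C1 C0 Z i \<omega> \<ge> ennreal t)"

definition Nbar1 :: "nat \<Rightarrow> (nat \<Rightarrow> real) \<Rightarrow> (nat \<Rightarrow> real) \<Rightarrow> (nat \<Rightarrow> 'a \<Rightarrow> ennreal) \<Rightarrow> (nat \<Rightarrow> 'a \<Rightarrow> ennreal) \<Rightarrow> (nat \<Rightarrow> 'a \<Rightarrow> bool) \<Rightarrow> real \<Rightarrow> 'a \<Rightarrow> nat" where
  "Nbar1 n T1 T0 C1 C0 Z t \<omega> = card {i\<in>{..<n}. Z i \<omega> \<and> Wobs T1 T0 C1 C0 Z i \<omega> \<ge> ennreal t}"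

definition Nbar :: "nat \<Rightarrow> (nat \<Rightarrow> real) \<Rightarrow> (nat \<Rightarrow> real) \<Rightarrow> (nat \<Rightarrow> 'a \<Rightarrow> ennreal) \<Rightarrow> (nat \<Rightarrow> 'a \<Rightarrow> ennreal) \<Rightarrow> (nat \<Rightarrow> 'a \<Rightarrow> bool) \<Rightarrow> real \<Rightarrow> 'a \<Rightarrow> nat" where
  "Nbar n T1 T0 C1 C0 Z t \<omega> = card {i\<in>{..<n}. Wobs T1 T0 C1 C0 Z i \<omega> \<ge> ennreal t}"

definition Dbar1 :: "nat \<Rightarrow> (nat \<Rightarrow> real) \<Rightarrow> (nat \<Rightarrow> real) \<Rightarrow> (nat \<Rightarrow> 'a \<Rightarrow> ennreal) \<Rightarrow> (nat \<Rightarrow> 'a \<Rightarrow> ennreal) \<Rightarrow> (nat \<Rightarrow> 'a \<Rightarrow> bool) \<Rightarrow> real \<Rightarrow> 'a \<Rightarrow> nat" where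
  "Dbar1 n T1 T0 C1 C0 Z t \<omega> = card {i\<in>{..<n}. Z i \<omega> \<and> Dobs T1 T0 C1 C0 Z i \<omega> \<and> Wobs T1 T0 C1 C0 Z i \<omega> = ennreal t}"

definition Dbar :: "nat \<Rightarrow> (nat \<Rightarrow> real) \<Rightarrow> (nat \<Rightarrow> real) \<Rightarrow> (nat \<Rightarrow> 'a \<Rightarrow> ennreal) \<Rightarrow> (nat \<Rightarrow> 'a \<Rightarrow> ennreal) \<Rightarrow> (nat \<Rightarrow> 'a \<Rightarrow> bool) \<Rightarrow> real \<Rightarrow> 'a \<Rightarrow> nat" where
  "Dbar n T1 T0 C1 C0 Z t \<omega> = card {i\<in>{..<n}. Dobs T1 T0 C1 C0 Z i \<omega> \<and> Wobs T1 T0 C1 C0 Z i \<omega> = ennreal t}"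

(* G_1(c) = Pr(C_i(1) \<ge> c), G_0(c) = Pr(C_i(0) \<ge> c), read off the common law Q of (C_i(1), C_i(0)) *)
definition G1 :: "(ennreal \<times> ennreal) measure \<Rightarrow> ennreal \<Rightarrow> real" where
  "G1 Q c = measure Q {x \<in> space Q. fst x \<ge> c}"

definition G0 :: "(ennreal \<times> ennreal) measure \<Rightarrow> ennreal \<Rightarrow> real" where
  "G0 Q c = measure Q {x \<in> space Q. snd x \<ge> c}"

definition phi :: "real \<Rightarrow> (ennreal \<times> ennreal) measure \<Rightarrow> real \<Rightarrow> real" where
  "phi p1 Q t = p1 * G1 Q (ennreal t) / (p1 * G1 Q (ennreal t) + (1 - p1) * G0 Q (ennreal t))"

definition binom_int :: "int \<Rightarrow> int \<Rightarrow> real" where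
  "binom_int a b = (if 0 \<le> b \<and> b \<le> a then real (nat a choose nat b) else 0)"

end

theory Submission
  imports Defs
begin


lemma (in prob_space) indep_vars_prod:
  assumes ind: "indep_vars M' X I" and J: "J \<subseteq> I" "finite J"
    and A: "\<forall>j\<in>J. A j \<in> sets (M' j)"
  shows "prob {\<omega>\<in>space M. \<forall>j\<in>J. X j \<omega> \<in> A j} = (\<Prod>j\<in>J. prob {\<omega>\<in>space M. X j \<omega> \<in> A j})"
proof (cases "J = {}")
  case True then show ?thesis by (simp add: prob_space)
next
  case False
  have "{\<omega>\<in>space M. \<forall>j\<in>J. X j \<omega> \<in> A j} = (\<Inter>j\<in>J. X j -` A j \<inter> space M)"
    using False by auto
  moreover have "prob (\<Inter>j\<in>J. X j -` A j \<inter> space M) = (\<Prod>j\<in>J. prob (X j -` A j \<inter> space M))"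
    using ind J A False unfolding indep_vars_def2 by (intro indep_setsD) auto
  moreover have "\<And>j. X j -` A j \<inter> space M = {\<omega>\<in>space M. X j \<omega> \<in> A j}" by auto
  ultimately show ?thesis by simp
qed

lemma (in finite_measure) sum_atoms:
  assumes R: "finite R" "\<forall>\<omega>\<in>space M. Y \<omega> \<in> R"
    and meas: "\<forall>y\<in>R. {\<omega>\<in>space M. Y \<omega> = y} \<in> sets M"
  shows "measure M {\<omega>\<in>space M. P (Y \<omega>)} = (\<Sum>y\<in>{y\<in>R. P y}. measure M {\<omega>\<in>space M. Y \<omega> = y})"
proof -
  have "{\<omega>\<in>space M. P (Y \<omega>)} = (\<Union>y\<in>{y\<in>R. P y}. {\<omega>\<in>space M. Y \<omega> = y})"
    using R by auto
  moreover have "measure M (\<Union>y\<in>{y\<in>R. P y}. {\<omega>\<in>space M. Y \<omega> = y}) = (\<Sum>y\<in>{y\<in>R. P y}. measure M {\<omega>\<in>space M. Y \<omega> = y})"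
    using R meas by (intro finite_measure_finite_Union) (auto simp: disjoint_family_on_def)
  ultimately show ?thesis by simp
qed

lemma bool_pair_mem: "((a::bool,b::bool)\<in>B) = ((a \<and> b \<and> (True,True)\<in>B) \<or> (a \<and> \<not>b \<and> (True,False)\<in>B) \<or> (\<not>a \<and> b \<and> (False,True)\<in>B) \<or> (\<not>a \<and> \<not>b \<and> (False,False)\<in>B))"
  by (cases a; cases b) auto

lemma pred_comp_bool: "i \<in> I \<Longrightarrow> Measurable.pred (PiM I (\<lambda>_. count_space UNIV)) (\<lambda>f. f i \<in> (B :: bool set))"
proof -
  have e: "(f i \<in> B) = ((f i \<and> True \<in> B) \<or> (\<not> f i \<and> False \<in> B))" for f by (cases "f i") auto
  show "i \<in> I \<Longrightarrow> ?thesis" by (subst e) measurable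
qed

lemma pred_comp_pair: "i \<in> I \<Longrightarrow> Measurable.pred (PiM I (\<lambda>_. borel \<Otimes>\<^sub>M borel)) (\<lambda>g. (c \<le> fst (g i), (c::ennreal) \<le> snd (g i)) \<in> B)"
  by (subst bool_pair_mem) measurable

lemma bool_eq_disj: "((P::bool) = b) = ((b \<and> P) \<or> (\<not> b \<and> \<not> P))" by auto

locale cens =
  fixes M :: "'a measure" and n :: nat and Z :: "nat \<Rightarrow> 'a \<Rightarrow> bool"
    and C1 C0 :: "nat \<Rightarrow> 'a \<Rightarrow> ennreal" and c :: ennreal
  assumes P: "prob_space M"
    and Zmeas: "\<forall>i<n. Z i \<in> measurable M (count_space UNIV)"
    and Zindep: "prob_space.indep_vars M (\<lambda>_. count_space UNIV) Z {..<n}"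
    and Cmeas: "\<forall>i<n. C1 i \<in> borel_measurable M \<and> C0 i \<in> borel_measurable M"
    and Cindep: "prob_space.indep_vars M (\<lambda>_. borel \<Otimes>\<^sub>M borel) (\<lambda>i \<omega>. (C1 i \<omega>, C0 i \<omega>)) {..<n}"
    and ZCindep: "\<forall>S \<in> sets (PiM {..<n} (\<lambda>_. count_space UNIV)).
        \<forall>R \<in> sets (PiM {..<n} (\<lambda>_. borel \<Otimes>\<^sub>M borel)).
          measure M {\<omega> \<in> space M. (\<lambda>i\<in>{..<n}. Z i \<omega>) \<in> S \<and> (\<lambda>i\<in>{..<n}. (C1 i \<omega>, C0 i \<omega>)) \<in> R}
          = measure M {\<omega> \<in> space M. (\<lambda>i\<in>{..<n}. Z i \<omega>) \<in> S}
            * measure M {\<omega> \<in> space M. (\<lambda>i\<in>{..<n}. (C1 i \<omega>, C0 i \<omega>)) \<in> R}"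
begin

sublocale prob_space M by (rule P)

definition X :: "nat \<Rightarrow> 'a \<Rightarrow> bool \<times> bool \<times> bool" where
  "X i \<omega> = (Z i \<omega>, c \<le> C1 i \<omega>, c \<le> C0 i \<omega>)"

definition rX :: "nat \<Rightarrow> 'a \<Rightarrow> nat \<Rightarrow> bool \<times> bool \<times> bool" where
  "rX k \<omega> = (\<lambda>i\<in>{..<k}. X i \<omega>)"

lemma rect:
  assumes I: "I \<subseteq> {..<n}"
  shows "measure M {\<omega>\<in>space M. \<forall>i\<in>I. Z i \<omega> \<in> BZ i \<and> (c \<le> C1 i \<omega>, c \<le> C0 i \<omega>) \<in> BC i}
    = (\<Prod>i\<in>I. measure M {\<omega>\<in>space M. Z i \<omega> \<in> BZ i} * measure M {\<omega>\<in>space M. (c \<le> C1 i \<omega>, c \<le> C0 i \<omega>) \<in> BC i})"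
proof -
  have fI: "finite I" using I finite_subset by blast
  define S where "S = {f\<in>space (PiM {..<n} (\<lambda>_. count_space UNIV)). \<forall>i\<in>I. f i \<in> BZ i}"
  define R where "R = {g\<in>space (PiM {..<n} (\<lambda>_. borel \<Otimes>\<^sub>M borel)). \<forall>i\<in>I. (c \<le> fst (g i), c \<le> snd (g i)) \<in> BC i}"
  have S: "S \<in> sets (PiM {..<n} (\<lambda>_. count_space UNIV))"
    unfolding S_def pred_def[symmetric] using I fI by (intro pred_intros_finite pred_comp_bool) auto
  have R: "R \<in> sets (PiM {..<n} (\<lambda>_. borel \<Otimes>\<^sub>M borel))"
    unfolding R_def pred_def[symmetric] using I fI by (intro pred_intros_finite pred_comp_pair) auto
  have e1: "{\<omega> \<in> space M. (\<lambda>i\<in>{..<n}. Z i \<omega>) \<in> S \<and> (\<lambda>i\<in>{..<n}. (C1 i \<omega>, C0 i \<omega>)) \<in> R}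
     = {\<omega>\<in>space M. \<forall>i\<in>I. Z i \<omega> \<in> BZ i \<and> (c \<le> C1 i \<omega>, c \<le> C0 i \<omega>) \<in> BC i}"
    using I unfolding S_def R_def by (auto simp: space_PiM space_pair_measure)
  have e2: "{\<omega> \<in> space M. (\<lambda>i\<in>{..<n}. Z i \<omega>) \<in> S} = {\<omega>\<in>space M. \<forall>i\<in>I. Z i \<omega> \<in> BZ i}"
    using I unfolding S_def by (auto simp: space_PiM)
  have e3: "{\<omega> \<in> space M. (\<lambda>i\<in>{..<n}. (C1 i \<omega>, C0 i \<omega>)) \<in> R}
     = {\<omega>\<in>space M. \<forall>i\<in>I. (C1 i \<omega>, C0 i \<omega>) \<in> {p. (c \<le> fst p, c \<le> snd p) \<in> BC i}}"
    using I unfolding R_def by (auto simp: space_PiM space_pair_measure)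
  have m2: "measure M {\<omega>\<in>space M. \<forall>i\<in>I. Z i \<omega> \<in> BZ i} = (\<Prod>i\<in>I. measure M {\<omega>\<in>space M. Z i \<omega> \<in> BZ i})"
    using indep_vars_prod[OF Zindep I fI] by simp
  have BCs: "{p. (c \<le> fst p, c \<le> snd p) \<in> B} \<in> sets (borel \<Otimes>\<^sub>M borel)" for B :: "(bool \<times> bool) set"
  proof -
    have "Measurable.pred (borel \<Otimes>\<^sub>M borel) (\<lambda>p::ennreal \<times> ennreal. (c \<le> fst p, c \<le> snd p) \<in> B)"
      by (subst bool_pair_mem) measurable
    then show ?thesis unfolding pred_def by (simp add: space_pair_measure)
  qed
  have m3: "measure M {\<omega>\<in>space M. \<forall>i\<in>I. (C1 i \<omega>, C0 i \<omega>) \<in> {p. (c \<le> fst p, c \<le> snd p) \<in> BC i}}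
     = (\<Prod>i\<in>I. measure M {\<omega>\<in>space M. (C1 i \<omega>, C0 i \<omega>) \<in> {p. (c \<le> fst p, c \<le> snd p) \<in> BC i}})"
    using BCs by (intro indep_vars_prod[OF Cindep I fI]) auto
  have "measure M {\<omega> \<in> space M. (\<lambda>i\<in>{..<n}. Z i \<omega>) \<in> S \<and> (\<lambda>i\<in>{..<n}. (C1 i \<omega>, C0 i \<omega>)) \<in> R}
          = measure M {\<omega> \<in> space M. (\<lambda>i\<in>{..<n}. Z i \<omega>) \<in> S}
            * measure M {\<omega> \<in> space M. (\<lambda>i\<in>{..<n}. (C1 i \<omega>, C0 i \<omega>)) \<in> R}"
    using ZCindep S R by blast
  then show ?thesis
    unfolding e1 e2 e3 m2 m3 by (simp add: prod.distrib)
qed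

end



context cens begin

lemma X_atom_meas: "i < n \<Longrightarrow> {\<omega>\<in>space M. X i \<omega> = v} \<in> sets M"
proof -
  assume i: "i < n"
  have [measurable]: "Z i \<in> measurable M (count_space UNIV)" "C1 i \<in> borel_measurable M" "C0 i \<in> borel_measurable M"
    using i Zmeas Cmeas by auto
  have e: "(X i \<omega> = v) = ((Z i \<omega> = fst v) \<and> ((c \<le> C1 i \<omega>) = fst (snd v)) \<and> ((c \<le> C0 i \<omega>) = snd (snd v)))" for \<omega>
    by (auto simp: X_def prod_eq_iff)
  have "Measurable.pred M (\<lambda>\<omega>. X i \<omega> = v)"
    unfolding e bool_eq_disj by measurable
  then show ?thesis unfolding pred_def .
qed

lemma atoms_meas: "I \<subseteq> {..<n} \<Longrightarrow> {\<omega>\<in>space M. \<forall>i\<in>I. X i \<omega> = x i} \<in> sets M"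
  by (intro sets.sets_Collect_finite_All X_atom_meas) (auto intro: finite_subset[OF _ finite_lessThan[of n]])

lemma atom:
  assumes I: "I \<subseteq> {..<n}"
  shows "measure M {\<omega>\<in>space M. \<forall>i\<in>I. X i \<omega> = x i} = (\<Prod>i\<in>I. measure M {\<omega>\<in>space M. X i \<omega> = x i})"
proof -
  have e: "(X i \<omega> = v) = (Z i \<omega> \<in> {fst v} \<and> (c \<le> C1 i \<omega>, c \<le> C0 i \<omega>) \<in> {snd v})" for i \<omega> v
    by (auto simp: X_def prod_eq_iff)
  have one: "measure M {\<omega>\<in>space M. X i \<omega> = x i} = measure M {\<omega>\<in>space M. Z i \<omega> \<in> {fst (x i)}} * measure M {\<omega>\<in>space M. (c \<le> C1 i \<omega>, c \<le> C0 i \<omega>) \<in> {snd (x i)}}"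
    if "i \<in> I" for i
    using rect[of "{i}" "\<lambda>_. {fst (x i)}" "\<lambda>_. {snd (x i)}"] that I unfolding e by auto
  show ?thesis
    unfolding e using rect[OF I, of "\<lambda>i. {fst (x i)}" "\<lambda>i. {snd (x i)}"] one
    by (simp add: e)
qed

lemma rX_eq: "x \<in> PiE {..<k} (\<lambda>_. UNIV) \<Longrightarrow> (rX k \<omega> = x) = (\<forall>i\<in>{..<k}. X i \<omega> = x i)"
  by (auto simp: rX_def PiE_iff extensional_def fun_eq_iff)

lemma cond_k:
  assumes k: "k < n"
  shows "measure M {\<omega>\<in>space M. F (rX k \<omega>) (X k \<omega>)}
    = (\<Sum>v\<in>UNIV. measure M {\<omega>\<in>space M. F (rX k \<omega>) v} * measure M {\<omega>\<in>space M. X k \<omega> = v})"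
proof -
  define R1 where "R1 = PiE {..<k} (\<lambda>_. UNIV::(bool\<times>bool\<times>bool) set)"
  have fin: "finite R1" unfolding R1_def by (simp add: finite_PiE)
  have rXin: "rX k \<omega> \<in> R1" for \<omega> unfolding R1_def rX_def by simp
  have atomk: "{\<omega>\<in>space M. rX k \<omega> = x} = {\<omega>\<in>space M. \<forall>i\<in>{..<k}. X i \<omega> = x i}" if "x \<in> R1" for x
    using rX_eq that unfolding R1_def by blast
  have joint: "{\<omega>\<in>space M. (rX k \<omega>, X k \<omega>) = (x, v)} = {\<omega>\<in>space M. \<forall>i\<in>{..<Suc k}. X i \<omega> = (x(k:=v)) i}"
    if "x \<in> R1" for x v
    using rX_eq[OF that[unfolded R1_def]] by (auto simp: less_Suc_eq)
  have mjoint: "measure M {\<omega>\<in>space M. (rX k \<omega>, X k \<omega>) = (x, v)} = measure M {\<omega>\<in>space M. rX k \<omega> = x} * measure M {\<omega>\<in>space M. X k \<omega> = v}"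
    if "x \<in> R1" for x v
  proof -
    have "measure M {\<omega>\<in>space M. (rX k \<omega>, X k \<omega>) = (x, v)} = (\<Prod>i\<in>{..<Suc k}. measure M {\<omega>\<in>space M. X i \<omega> = (x(k:=v)) i})"
      unfolding joint[OF that] using k by (intro atom) auto
    also have "\<dots> = (\<Prod>i\<in>{..<k}. measure M {\<omega>\<in>space M. X i \<omega> = x i}) * measure M {\<omega>\<in>space M. X k \<omega> = v}"
      by (simp add: prod.lessThan_Suc)
    also have "(\<Prod>i\<in>{..<k}. measure M {\<omega>\<in>space M. X i \<omega> = x i}) = measure M {\<omega>\<in>space M. rX k \<omega> = x}"
      unfolding atomk[OF that] using k by (intro atom[symmetric]) auto
    finally show ?thesis .
  qed
  have "measure M {\<omega>\<in>space M. F (rX k \<omega>) (X k \<omega>)}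
      = measure M {\<omega>\<in>space M. (\<lambda>y. F (fst y) (snd y)) (rX k \<omega>, X k \<omega>)}" by simp
  also have "\<dots> = (\<Sum>y\<in>{y\<in>R1 \<times> UNIV. F (fst y) (snd y)}. measure M {\<omega>\<in>space M. (rX k \<omega>, X k \<omega>) = y})"
  proof (rule sum_atoms)
    show "finite (R1 \<times> (UNIV :: (bool\<times>bool\<times>bool) set))" using fin by (intro finite_cartesian_product) auto
    show "\<forall>\<omega>\<in>space M. (rX k \<omega>, X k \<omega>) \<in> R1 \<times> UNIV" using rXin by simp
    show "\<forall>y\<in>R1 \<times> UNIV. {\<omega> \<in> space M. (rX k \<omega>, X k \<omega>) = y} \<in> sets M"
    proof
      fix y assume "y \<in> R1 \<times> (UNIV :: (bool\<times>bool\<times>bool) set)"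
      then obtain x v where y: "y = (x, v)" "x \<in> R1" by auto
      show "{\<omega> \<in> space M. (rX k \<omega>, X k \<omega>) = y} \<in> sets M"
        unfolding y(1) joint[OF y(2)] using k by (intro atoms_meas) auto
    qed
  qed
  also have "\<dots> = (\<Sum>y\<in>R1 \<times> UNIV. if F (fst y) (snd y) then measure M {\<omega>\<in>space M. rX k \<omega> = fst y} * measure M {\<omega>\<in>space M. X k \<omega> = snd y} else 0)"
    using fin by (subst sum.inter_filter[symmetric]) (auto intro!: sum.cong simp: mjoint[simplified])
  also have "\<dots> = (\<Sum>x\<in>R1. \<Sum>v\<in>UNIV. if F x v then measure M {\<omega>\<in>space M. rX k \<omega> = x} * measure M {\<omega>\<in>space M. X k \<omega> = v} else 0)"
    by (subst sum.cartesian_product) (simp add: case_prod_beta)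
  also have "\<dots> = (\<Sum>v\<in>UNIV. \<Sum>x\<in>R1. if F x v then measure M {\<omega>\<in>space M. rX k \<omega> = x} * measure M {\<omega>\<in>space M. X k \<omega> = v} else 0)"
    by (rule sum.swap)
  also have "\<dots> = (\<Sum>v\<in>UNIV. measure M {\<omega>\<in>space M. F (rX k \<omega>) v} * measure M {\<omega>\<in>space M. X k \<omega> = v})"
  proof (rule sum.cong[OF refl])
    fix v
    have "measure M {\<omega>\<in>space M. F (rX k \<omega>) v} = (\<Sum>x\<in>{x\<in>R1. F x v}. measure M {\<omega>\<in>space M. rX k \<omega> = x})"
      using fin rXin atomk atoms_meas k by (intro sum_atoms) auto
    also have "\<dots> = (\<Sum>x\<in>R1. if F x v then measure M {\<omega>\<in>space M. rX k \<omega> = x} else 0)"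
      using fin by (simp add: sum.inter_filter)
    finally show "(\<Sum>x\<in>R1. if F x v then measure M {\<omega>\<in>space M. rX k \<omega> = x} * measure M {\<omega>\<in>space M. X k \<omega> = v} else 0)
        = measure M {\<omega>\<in>space M. F (rX k \<omega>) v} * measure M {\<omega>\<in>space M. X k \<omega> = v}"
      by (auto simp add: sum_distrib_right intro!: sum.cong)
  qed
  finally show ?thesis .
qed

end



definition coef :: "real \<Rightarrow> int \<Rightarrow> int \<Rightarrow> int \<Rightarrow> int \<Rightarrow> real" where
  "coef ph d N A B = binom_int d A * binom_int (N - d) (B - A) * ph ^ (nat B) * (1 - ph) ^ (nat (N - B))"

lemma binom_int_nz: "binom_int a b \<noteq> 0 \<Longrightarrow> 0 \<le> b \<and> b \<le> a"
  by (simp add: binom_int_def split: if_splits)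

lemma binom_int_nonneg: "0 \<le> a \<Longrightarrow> 0 \<le> b \<Longrightarrow> binom_int a b = real (nat a choose nat b)"
  by (auto simp: binom_int_def binomial_eq_0)

lemma binom_int_pascal:
  assumes "0 \<le> a" shows "binom_int (a + 1) b = binom_int a (b - 1) + binom_int a b"
proof -
  obtain m where m: "a = int m" using assms nonneg_eq_int by blast
  consider "b < 0" | "b = 0" | j where "b = int (Suc j)"
  proof -
    assume h1: "b < 0 \<Longrightarrow> thesis" and h2: "b = 0 \<Longrightarrow> thesis" and h3: "\<And>j. b = int (Suc j) \<Longrightarrow> thesis"
    show thesis
    proof (cases "b > 0")
      case True
      then obtain j where "b = int j" "0 < j" using pos_int_cases by blast
      then show thesis using h3[of "j - 1"] by simp
    next
      case False then show thesis using h1 h2 by linarith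
    qed
  qed
  then show ?thesis
  proof cases
    case 1 then show ?thesis by (simp add: binom_int_def)
  next
    case 2 then show ?thesis using m by (simp add: binom_int_def)
  next
    case 3
    have nb: "nat b = Suc j" "nat (b - 1) = j" "0 \<le> b" "0 \<le> b - 1" using 3 by auto
    have na: "nat a = m" "nat (a + 1) = Suc m" "0 \<le> a + 1" using m by auto
    have e1: "binom_int (a + 1) b = real (Suc m choose Suc j)"
      by (simp add: binom_int_nonneg[OF na(3) nb(3)] na nb)
    have e2: "binom_int a (b - 1) = real (m choose j)"
      by (simp add: binom_int_nonneg[OF assms nb(4)] na nb)
    have e3: "binom_int a b = real (m choose Suc j)"
      by (simp add: binom_int_nonneg[OF assms nb(3)] na nb)
    show ?thesis unfolding e1 e2 e3 by simp
  qed
qed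

lemma pascalD:
  assumes d: "0 \<le> d" and al: "\<alpha> = ph * (\<alpha> + \<beta>)" and be: "\<beta> = (1 - ph) * (\<alpha> + \<beta>)"
  shows "coef ph d N (A - 1) (B - 1) * \<alpha> + coef ph d N A B * \<beta> = coef ph (d + 1) (N + 1) A B * (\<alpha> + \<beta>)"
proof -
  define b2 where "b2 = binom_int (N - d) (B - A)"
  have t1: "coef ph d N (A - 1) (B - 1) * \<alpha> = binom_int d (A - 1) * b2 * ph ^ (nat B) * (1 - ph) ^ (nat (N + 1 - B)) * (\<alpha> + \<beta>)"
  proof (cases "binom_int d (A - 1) = 0 \<or> b2 = 0")
    case True then show ?thesis unfolding coef_def b2_def by auto
  next
    case False
    then have "0 \<le> A - 1" "0 \<le> B - A" using binom_int_nz unfolding b2_def by blast+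
    then have nB: "nat B = Suc (nat (B - 1))" by simp
    define x where "x = binom_int d (A - 1) * b2 * ph ^ (nat (B - 1)) * (1 - ph) ^ (nat (N + 1 - B))"
    have c1: "coef ph d N (A - 1) (B - 1) = x" unfolding coef_def b2_def x_def
      by (simp add: algebra_simps)
    have "x * \<alpha> = x * (ph * (\<alpha> + \<beta>))" using al by (rule arg_cong)
    then show ?thesis unfolding c1 nB power_Suc unfolding x_def by (simp only: mult_ac)
  qed
  have t2: "coef ph d N A B * \<beta> = binom_int d A * b2 * ph ^ (nat B) * (1 - ph) ^ (nat (N + 1 - B)) * (\<alpha> + \<beta>)"
  proof (cases "binom_int d A = 0 \<or> b2 = 0")
    case True then show ?thesis unfolding coef_def b2_def by auto
  next
    case False
    then have "A \<le> d" "B - A \<le> N - d" using binom_int_nz unfolding b2_def by blast+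
    then have nB: "nat (N + 1 - B) = Suc (nat (N - B))" by simp
    define x where "x = binom_int d A * b2 * ph ^ (nat B) * (1 - ph) ^ (nat (N - B))"
    have c1: "coef ph d N A B = x" unfolding coef_def b2_def x_def by simp
    have "x * \<beta> = x * ((1 - ph) * (\<alpha> + \<beta>))" using be by (rule arg_cong)
    then show ?thesis unfolding c1 nB power_Suc unfolding x_def by (simp only: mult_ac)
  qed
  have c: "coef ph (d + 1) (N + 1) A B = (binom_int d (A - 1) + binom_int d A) * b2 * ph ^ (nat B) * (1 - ph) ^ (nat (N + 1 - B))"
    unfolding coef_def b2_def binom_int_pascal[OF d] by simp
  show ?thesis unfolding t1 t2 c by (simp only: distrib_right)
qed

lemma pascalN:
  assumes d: "0 \<le> d" "d \<le> N" and al: "\<alpha> = ph * (\<alpha> + \<beta>)" and be: "\<beta> = (1 - ph) * (\<alpha> + \<beta>)"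
  shows "coef ph d N A (B - 1) * \<alpha> + coef ph d N A B * \<beta> = coef ph d (N + 1) A B * (\<alpha> + \<beta>)"
proof -
  define b1 where "b1 = binom_int d A"
  have t1: "coef ph d N A (B - 1) * \<alpha> = b1 * binom_int (N - d) (B - A - 1) * ph ^ (nat B) * (1 - ph) ^ (nat (N + 1 - B)) * (\<alpha> + \<beta>)"
  proof (cases "b1 = 0 \<or> binom_int (N - d) (B - A - 1) = 0")
    case True then show ?thesis unfolding coef_def b1_def by (auto simp: algebra_simps)
  next
    case False
    then have "0 \<le> A" "0 \<le> B - A - 1" using binom_int_nz unfolding b1_def by blast+
    then have nB: "nat B = Suc (nat (B - 1))" by simp
    define x where "x = b1 * binom_int (N - d) (B - A - 1) * ph ^ (nat (B - 1)) * (1 - ph) ^ (nat (N + 1 - B))"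
    have c1: "coef ph d N A (B - 1) = x" unfolding coef_def b1_def x_def
      by (simp add: algebra_simps)
    have "x * \<alpha> = x * (ph * (\<alpha> + \<beta>))" using al by (rule arg_cong)
    then show ?thesis unfolding c1 nB power_Suc unfolding x_def by (simp only: mult_ac)
  qed
  have t2: "coef ph d N A B * \<beta> = b1 * binom_int (N - d) (B - A) * ph ^ (nat B) * (1 - ph) ^ (nat (N + 1 - B)) * (\<alpha> + \<beta>)"
  proof (cases "b1 = 0 \<or> binom_int (N - d) (B - A) = 0")
    case True then show ?thesis unfolding coef_def b1_def by auto
  next
    case False
    then have "A \<le> d" "B - A \<le> N - d" using binom_int_nz unfolding b1_def by blast+
    then have nB: "nat (N + 1 - B) = Suc (nat (N - B))" by simp
    define x where "x = b1 * binom_int (N - d) (B - A) * ph ^ (nat B) * (1 - ph) ^ (nat (N - B))"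
    have c1: "coef ph d N A B = x" unfolding coef_def b1_def x_def by simp
    have "x * \<beta> = x * ((1 - ph) * (\<alpha> + \<beta>))" using be by (rule arg_cong)
    then show ?thesis unfolding c1 nB power_Suc unfolding x_def by (simp only: mult_ac)
  qed
  have nd: "0 \<le> N - d" using d by simp
  have c: "coef ph d (N + 1) A B = b1 * (binom_int (N - d) (B - A - 1) + binom_int (N - d) (B - A)) * ph ^ (nat B) * (1 - ph) ^ (nat (N + 1 - B))"
  proof -
    have e: "N + 1 - d = (N - d) + 1" by simp
    show ?thesis by (simp only: coef_def b1_def e binom_int_pascal[OF nd])
  qed
  show ?thesis unfolding t1 t2 c by (simp only: distrib_right distrib_left)
qed




definition evx :: "bool \<times> bool \<times> bool \<Rightarrow> bool" where
  "evx v = (if fst v then fst (snd v) else snd (snd v))"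

lemma card_Suc_filter: "card {i\<in>{..<Suc k}. P i} = card {i\<in>{..<k}. P i} + (if P k then 1 else 0)"
proof -
  have "{i\<in>{..<Suc k}. P i} = (if P k then insert k {i\<in>{..<k}. P i} else {i\<in>{..<k}. P i})"
    by (auto simp: less_Suc_eq)
  then show ?thesis by simp
qed

lemma all_less_Suc_iff: "(\<forall>i<Suc k. P i) = ((\<forall>i<k. P i) \<and> P k)"
  by (auto simp: less_Suc_eq)

lemma UNIV3: "(UNIV :: (bool \<times> bool \<times> bool) set) = {(True,True,True), (True,True,False), (True,False,True), (True,False,False),
   (False,True,True), (False,True,False), (False,False,True), (False,False,False)}"
  by auto

lemma step_alg:
  fixes q :: "bool \<times> bool \<times> bool \<Rightarrow> real"
  assumes DR: "D \<longrightarrow> R" and d: "0 \<le> d" "d \<le> N"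
    and al: "q (True,True,True) + q (True,True,False) = ph * ((q (True,True,True) + q (True,True,False)) + (q (False,True,True) + q (False,False,True)))"
    and be: "q (False,True,True) + q (False,False,True) = (1 - ph) * ((q (True,True,True) + q (True,True,False)) + (q (False,True,True) + q (False,False,True)))"
  shows "(\<Sum>v\<in>UNIV. (if (R \<longrightarrow> evx v = E) then coef ph d N (A - (if fst v \<and> D \<and> evx v then 1 else 0)) (B - (if fst v \<and> R \<and> evx v then 1 else 0)) * mp else 0) * q v)
    = coef ph (d + (if D \<and> E then 1 else 0)) (N + (if R \<and> E then 1 else 0)) A B * (\<Sum>v\<in>UNIV. (if R \<longrightarrow> evx v = E then mp else 0) * q v)"
proof -
  define \<alpha> where "\<alpha> = q (True,True,True) + q (True,True,False)"
  define \<beta> where "\<beta> = q (False,True,True) + q (False,False,True)"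
  have al': "\<alpha> = ph * (\<alpha> + \<beta>)" and be': "\<beta> = (1 - ph) * (\<alpha> + \<beta>)" using al be unfolding \<alpha>_def \<beta>_def by simp_all
  consider "\<not> R" | "R" "\<not> E" | "R" "E" "D" | "R" "E" "\<not> D" by blast
  then show ?thesis
  proof cases
    case 1
    then have "\<not> D" using DR by blast
    then show ?thesis using 1 by (simp add: UNIV3 evx_def algebra_simps)
  next
    case 2
    then show ?thesis by (simp add: UNIV3 evx_def algebra_simps)
  next
    case 3
    have "coef ph d N (A - 1) (B - 1) * \<alpha> + coef ph d N A B * \<beta> = coef ph (d + 1) (N + 1) A B * (\<alpha> + \<beta>)"
      by (rule pascalD[OF d(1) al' be'])
    then have "mp * (coef ph d N (A - 1) (B - 1) * \<alpha> + coef ph d N A B * \<beta>) = mp * (coef ph (d + 1) (N + 1) A B * (\<alpha> + \<beta>))"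
      by simp
    then show ?thesis using 3 unfolding \<alpha>_def \<beta>_def by (simp add: UNIV3 evx_def algebra_simps)
  next
    case 4
    have "coef ph d N A (B - 1) * \<alpha> + coef ph d N A B * \<beta> = coef ph d (N + 1) A B * (\<alpha> + \<beta>)"
      by (rule pascalN[OF d al' be'])
    then have "mp * (coef ph d N A (B - 1) * \<alpha> + coef ph d N A B * \<beta>) = mp * (coef ph d (N + 1) A B * (\<alpha> + \<beta>))"
      by simp
    then show ?thesis using 4 unfolding \<alpha>_def \<beta>_def by (simp add: UNIV3 evx_def algebra_simps)
  qed
qed



context cens begin

definition qX :: "nat \<Rightarrow> bool \<times> bool \<times> bool \<Rightarrow> real" where
  "qX i v = measure M {\<omega>\<in>space M. X i \<omega> = v}"

lemma rX_app: "i < k \<Longrightarrow> rX k \<omega> i = X i \<omega>"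
  by (simp add: rX_def)

lemma main_ind:
  fixes isD isR e0 :: "nat \<Rightarrow> bool" and ph :: real
  assumes DR: "\<forall>i. isD i \<longrightarrow> isR i"
    and ab: "\<forall>i<n. qX i (True,True,True) + qX i (True,True,False) = ph * ((qX i (True,True,True) + qX i (True,True,False)) + (qX i (False,True,True) + qX i (False,False,True)))
       \<and> qX i (False,True,True) + qX i (False,False,True) = (1 - ph) * ((qX i (True,True,True) + qX i (True,True,False)) + (qX i (False,True,True) + qX i (False,False,True)))"
  shows "k \<le> n \<Longrightarrow> \<forall>A B. measure M {\<omega>\<in>space M. (\<forall>i<k. isR i \<longrightarrow> evx (X i \<omega>) = e0 i)
        \<and> int (card {i\<in>{..<k}. fst (X i \<omega>) \<and> isD i \<and> evx (X i \<omega>)}) = A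
        \<and> int (card {i\<in>{..<k}. fst (X i \<omega>) \<and> isR i \<and> evx (X i \<omega>)}) = B}
     = coef ph (int (card {i\<in>{..<k}. isD i \<and> e0 i})) (int (card {i\<in>{..<k}. isR i \<and> e0 i})) A B
       * measure M {\<omega>\<in>space M. \<forall>i<k. isR i \<longrightarrow> evx (X i \<omega>) = e0 i}"
proof (induction k)
  case 0
  show ?case
  proof (intro allI)
    fix A B :: int
    show "measure M {\<omega>\<in>space M. (\<forall>i<0. isR i \<longrightarrow> evx (X i \<omega>) = e0 i)
        \<and> int (card {i\<in>{..<0}. fst (X i \<omega>) \<and> isD i \<and> evx (X i \<omega>)}) = A
        \<and> int (card {i\<in>{..<0}. fst (X i \<omega>) \<and> isR i \<and> evx (X i \<omega>)}) = B}
     = coef ph (int (card {i\<in>{..<0}. isD i \<and> e0 i})) (int (card {i\<in>{..<0}. isR i \<and> e0 i})) A B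
       * measure M {\<omega>\<in>space M. \<forall>i<0. isR i \<longrightarrow> evx (X i \<omega>) = e0 i}"
    proof (cases "A = 0 \<and> B = 0")
      case True then show ?thesis by (simp add: coef_def binom_int_def prob_space)
    next
      case False
      then have "coef ph 0 0 A B = 0" by (auto simp: coef_def binom_int_def)
      then show ?thesis using False by auto
    qed
  qed
next
  case (Suc k)
  then have k: "k < n" and IH: "\<forall>A B. measure M {\<omega>\<in>space M. (\<forall>i<k. isR i \<longrightarrow> evx (X i \<omega>) = e0 i)
        \<and> int (card {i\<in>{..<k}. fst (X i \<omega>) \<and> isD i \<and> evx (X i \<omega>)}) = A
        \<and> int (card {i\<in>{..<k}. fst (X i \<omega>) \<and> isR i \<and> evx (X i \<omega>)}) = B}
     = coef ph (int (card {i\<in>{..<k}. isD i \<and> e0 i})) (int (card {i\<in>{..<k}. isR i \<and> e0 i})) A B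
       * measure M {\<omega>\<in>space M. \<forall>i<k. isR i \<longrightarrow> evx (X i \<omega>) = e0 i}" by auto
  define mp where "mp = measure M {\<omega>\<in>space M. \<forall>i<k. isR i \<longrightarrow> evx (X i \<omega>) = e0 i}"
  define dk where "dk = int (card {i\<in>{..<k}. isD i \<and> e0 i})"
  define Nk where "Nk = int (card {i\<in>{..<k}. isR i \<and> e0 i})"
  define PT where "PT x = (\<forall>i<k. isR i \<longrightarrow> evx (x i) = e0 i)" for x :: "nat \<Rightarrow> bool \<times> bool \<times> bool"
  define cD where "cD x = int (card {i\<in>{..<k}. fst (x i) \<and> isD i \<and> evx (x i)})" for x :: "nat \<Rightarrow> bool \<times> bool \<times> bool"
  define cN where "cN x = int (card {i\<in>{..<k}. fst (x i) \<and> isR i \<and> evx (x i)})" for x :: "nat \<Rightarrow> bool \<times> bool \<times> bool"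
  define ok where "ok v = (isR k \<longrightarrow> evx v = e0 k)" for v
  define dD where "dD v = (if fst v \<and> isD k \<and> evx v then 1 else 0 :: int)" for v
  define dN where "dN v = (if fst v \<and> isR k \<and> evx v then 1 else 0 :: int)" for v
  have PTr: "PT (rX k \<omega>) = (\<forall>i<k. isR i \<longrightarrow> evx (X i \<omega>) = e0 i)" for \<omega>
    unfolding PT_def by (auto simp: rX_app)
  have cDr: "cD (rX k \<omega>) = int (card {i\<in>{..<k}. fst (X i \<omega>) \<and> isD i \<and> evx (X i \<omega>)})" for \<omega>
    unfolding cD_def by (simp add: rX_app cong: conj_cong)
  have cNr: "cN (rX k \<omega>) = int (card {i\<in>{..<k}. fst (X i \<omega>) \<and> isR i \<and> evx (X i \<omega>)})" for \<omega>
    unfolding cN_def by (simp add: rX_app cong: conj_cong)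
  have mF: "measure M {\<omega>\<in>space M. PT (rX k \<omega>) \<and> ok v \<and> cD (rX k \<omega>) + dD v = A \<and> cN (rX k \<omega>) + dN v = B}
     = (if ok v then coef ph dk Nk (A - dD v) (B - dN v) * mp else 0)" for v A B
  proof (cases "ok v")
    case True
    have "{\<omega>\<in>space M. PT (rX k \<omega>) \<and> ok v \<and> cD (rX k \<omega>) + dD v = A \<and> cN (rX k \<omega>) + dN v = B}
      = {\<omega>\<in>space M. (\<forall>i<k. isR i \<longrightarrow> evx (X i \<omega>) = e0 i)
        \<and> int (card {i\<in>{..<k}. fst (X i \<omega>) \<and> isD i \<and> evx (X i \<omega>)}) = A - dD v
        \<and> int (card {i\<in>{..<k}. fst (X i \<omega>) \<and> isR i \<and> evx (X i \<omega>)}) = B - dN v}"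
      using True unfolding PTr cDr cNr by auto
    then show ?thesis using IH True unfolding mp_def dk_def Nk_def by simp
  qed simp
  have mG: "measure M {\<omega>\<in>space M. PT (rX k \<omega>) \<and> ok v} = (if ok v then mp else 0)" for v
    unfolding mp_def PTr by simp
  have L: "measure M {\<omega>\<in>space M. (\<forall>i<Suc k. isR i \<longrightarrow> evx (X i \<omega>) = e0 i)
        \<and> int (card {i\<in>{..<Suc k}. fst (X i \<omega>) \<and> isD i \<and> evx (X i \<omega>)}) = A
        \<and> int (card {i\<in>{..<Suc k}. fst (X i \<omega>) \<and> isR i \<and> evx (X i \<omega>)}) = B}
      = (\<Sum>v\<in>UNIV. (if ok v then coef ph dk Nk (A - dD v) (B - dN v) * mp else 0) * qX k v)" for A B
  proof -
    have "{\<omega>\<in>space M. (\<forall>i<Suc k. isR i \<longrightarrow> evx (X i \<omega>) = e0 i)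
        \<and> int (card {i\<in>{..<Suc k}. fst (X i \<omega>) \<and> isD i \<and> evx (X i \<omega>)}) = A
        \<and> int (card {i\<in>{..<Suc k}. fst (X i \<omega>) \<and> isR i \<and> evx (X i \<omega>)}) = B}
      = {\<omega>\<in>space M. (\<lambda>x v. PT x \<and> ok v \<and> cD x + dD v = A \<and> cN x + dN v = B) (rX k \<omega>) (X k \<omega>)}"
      unfolding PTr cDr cNr card_Suc_filter all_less_Suc_iff ok_def dD_def dN_def by auto
    then show ?thesis using cond_k[OF k, of "\<lambda>x v. PT x \<and> ok v \<and> cD x + dD v = A \<and> cN x + dN v = B"] mF unfolding qX_def by simp
  qed
  have R: "measure M {\<omega>\<in>space M. \<forall>i<Suc k. isR i \<longrightarrow> evx (X i \<omega>) = e0 i}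
      = (\<Sum>v\<in>UNIV. (if ok v then mp else 0) * qX k v)"
  proof -
    have "{\<omega>\<in>space M. \<forall>i<Suc k. isR i \<longrightarrow> evx (X i \<omega>) = e0 i}
      = {\<omega>\<in>space M. (\<lambda>x v. PT x \<and> ok v) (rX k \<omega>) (X k \<omega>)}"
      unfolding PTr all_less_Suc_iff ok_def by auto
    then show ?thesis using cond_k[OF k, of "\<lambda>x v. PT x \<and> ok v"] mG unfolding qX_def by simp
  qed
  have dN: "dk \<le> Nk" unfolding dk_def Nk_def using DR by (auto intro!: card_mono)
  have d1: "int (card {i\<in>{..<Suc k}. isD i \<and> e0 i}) = dk + (if isD k \<and> e0 k then 1 else 0)"
    unfolding dk_def card_Suc_filter by simp
  have N1: "int (card {i\<in>{..<Suc k}. isR i \<and> e0 i}) = Nk + (if isR k \<and> e0 k then 1 else 0)"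
    unfolding Nk_def card_Suc_filter by simp
  show ?case
  proof (intro allI)
    fix A B
    show "measure M {\<omega>\<in>space M. (\<forall>i<Suc k. isR i \<longrightarrow> evx (X i \<omega>) = e0 i)
        \<and> int (card {i\<in>{..<Suc k}. fst (X i \<omega>) \<and> isD i \<and> evx (X i \<omega>)}) = A
        \<and> int (card {i\<in>{..<Suc k}. fst (X i \<omega>) \<and> isR i \<and> evx (X i \<omega>)}) = B}
     = coef ph (int (card {i\<in>{..<Suc k}. isD i \<and> e0 i})) (int (card {i\<in>{..<Suc k}. isR i \<and> e0 i})) A B
       * measure M {\<omega>\<in>space M. \<forall>i<Suc k. isR i \<longrightarrow> evx (X i \<omega>) = e0 i}"
      unfolding L R d1 N1 ok_def dD_def dN_def
      using DR ab k dN by (intro step_alg) (auto simp: dk_def)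
  qed
qed

end


context cens begin

lemma alpha_eq:
  assumes k: "k < n"
  shows "qX k (True,True,True) + qX k (True,True,False) = measure M {\<omega>\<in>space M. Z k \<omega>} * measure M {\<omega>\<in>space M. c \<le> C1 k \<omega>}"
proof -
  have "measure M {\<omega>\<in>space M. Z k \<omega> \<and> c \<le> C1 k \<omega>} = measure M {\<omega>\<in>space M. Z k \<omega>} * measure M {\<omega>\<in>space M. c \<le> C1 k \<omega>}"
    using rect[of "{k}" "\<lambda>_. {True}" "\<lambda>_. {p. fst p}"] k by simp
  moreover have "measure M {\<omega>\<in>space M. (\<lambda>v. fst v \<and> fst (snd v)) (X k \<omega>)} = (\<Sum>v\<in>{v\<in>UNIV. fst v \<and> fst (snd v)}. qX k v)"
    unfolding qX_def using X_atom_meas k by (intro sum_atoms) auto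
  moreover have "{v\<in>UNIV. fst v \<and> fst (snd v)} = {(True,True,True), (True,True,False)}" by auto
  ultimately show ?thesis by (simp add: X_def)
qed

lemma beta_eq:
  assumes k: "k < n"
  shows "qX k (False,True,True) + qX k (False,False,True) = measure M {\<omega>\<in>space M. \<not> Z k \<omega>} * measure M {\<omega>\<in>space M. c \<le> C0 k \<omega>}"
proof -
  have "measure M {\<omega>\<in>space M. \<not> Z k \<omega> \<and> c \<le> C0 k \<omega>} = measure M {\<omega>\<in>space M. \<not> Z k \<omega>} * measure M {\<omega>\<in>space M. c \<le> C0 k \<omega>}"
    using rect[of "{k}" "\<lambda>_. {False}" "\<lambda>_. {p. snd p}"] k by simp
  moreover have "measure M {\<omega>\<in>space M. (\<lambda>v. \<not> fst v \<and> snd (snd v)) (X k \<omega>)} = (\<Sum>v\<in>{v\<in>UNIV. \<not> fst v \<and> snd (snd v)}. qX k v)"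
    unfolding qX_def using X_atom_meas k by (intro sum_atoms) auto
  moreover have "{v\<in>UNIV. \<not> fst v \<and> snd (snd v)} = {(False,True,True), (False,False,True)}" by auto
  ultimately show ?thesis by (simp add: X_def)
qed

end

lemma obs_aux:
  assumes "0 \<le> T" "0 \<le> t"
  shows "((ennreal T \<le> C \<and> min (ennreal T) C = ennreal t) = (T = t \<and> ennreal t \<le> C))
    \<and> ((ennreal t \<le> min (ennreal T) C) = (t \<le> T \<and> ennreal t \<le> C))"
proof
  show "(ennreal T \<le> C \<and> min (ennreal T) C = ennreal t) = (T = t \<and> ennreal t \<le> C)"
    using assms by (auto simp: min_def ennreal_le_iff)
  show "(ennreal t \<le> min (ennreal T) C) = (t \<le> T \<and> ennreal t \<le> C)"
    using assms by (simp add: ennreal_le_iff)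
qed

lemma phi_rel:
  fixes a b :: real
  assumes "0 \<le> a" "0 \<le> b"
  shows "a = a / (a + b) * (a + b) \<and> b = (1 - a / (a + b)) * (a + b)"
proof (cases "a + b = 0")
  case True then show ?thesis using assms by auto
next
  case False then show ?thesis by (simp add: field_simps)
qed




theorem lemmaA2:
  fixes M :: "'a measure" and n :: nat and p1 :: real
    and T1 T0 :: "nat \<Rightarrow> real" and Z :: "nat \<Rightarrow> 'a \<Rightarrow> bool"
    and C1 C0 :: "nat \<Rightarrow> 'a \<Rightarrow> ennreal" and Q :: "(ennreal \<times> ennreal) measure"
    and t :: real and A B :: int and \<omega>0 :: 'a
  assumes P: "prob_space M"
    and p1: "0 < p1" "p1 < 1"
    and Tnonneg: "\<forall>i<n. T1 i \<ge> 0 \<and> T0 i \<ge> 0"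
    and H0: "\<forall>i<n. T1 i = T0 i"
    and Zmeas: "\<forall>i<n. Z i \<in> measurable M (count_space UNIV)"
    and Zbern: "\<forall>i<n. measure M {\<omega> \<in> space M. Z i \<omega>} = p1"
    and Zindep: "prob_space.indep_vars M (\<lambda>_. count_space UNIV) Z {..<n}"
    and Cmeas: "\<forall>i<n. C1 i \<in> borel_measurable M \<and> C0 i \<in> borel_measurable M"
    and Cindep: "prob_space.indep_vars M (\<lambda>_. borel \<Otimes>\<^sub>M borel) (\<lambda>i \<omega>. (C1 i \<omega>, C0 i \<omega>)) {..<n}"
    and Cident: "\<forall>i<n. distr M (borel \<Otimes>\<^sub>M borel) (\<lambda>\<omega>. (C1 i \<omega>, C0 i \<omega>)) = Q"
    and ZCindep: "\<forall>S \<in> sets (PiM {..<n} (\<lambda>_. count_space UNIV)).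
        \<forall>R \<in> sets (PiM {..<n} (\<lambda>_. borel \<Otimes>\<^sub>M borel)).
          measure M {\<omega> \<in> space M. (\<lambda>i\<in>{..<n}. Z i \<omega>) \<in> S \<and> (\<lambda>i\<in>{..<n}. (C1 i \<omega>, C0 i \<omega>)) \<in> R}
          = measure M {\<omega> \<in> space M. (\<lambda>i\<in>{..<n}. Z i \<omega>) \<in> S}
            * measure M {\<omega> \<in> space M. (\<lambda>i\<in>{..<n}. (C1 i \<omega>, C0 i \<omega>)) \<in> R}"
    and t: "t \<ge> 0"
    and \<omega>0: "\<omega>0 \<in> space M"
  shows "measure M {\<omega> \<in> space M.
            (\<forall>i<n. obs_ind T1 T0 C1 C0 Z t i \<omega> = obs_ind T1 T0 C1 C0 Z t i \<omega>0)
            \<and> int (Dbar1 n T1 T0 C1 C0 Z t \<omega>) = A \<and> int (Nbar1 n T1 T0 C1 C0 Z t \<omega>) = B}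
    = binom_int (int (Dbar n T1 T0 C1 C0 Z t \<omega>0)) A
      * binom_int (int (Nbar n T1 T0 C1 C0 Z t \<omega>0) - int (Dbar n T1 T0 C1 C0 Z t \<omega>0)) (B - A)
      * (phi p1 Q t) ^ (nat B)
      * (1 - phi p1 Q t) ^ (nat (int (Nbar n T1 T0 C1 C0 Z t \<omega>0) - B))
      * measure M {\<omega> \<in> space M.
            \<forall>i<n. obs_ind T1 T0 C1 C0 Z t i \<omega> = obs_ind T1 T0 C1 C0 Z t i \<omega>0}"
proof -
  interpret cens M n Z C1 C0 "ennreal t"
    by (rule cens.intro[OF P Zmeas Zindep Cmeas Cindep ZCindep])
  define isD where "isD i = (T1 i = t)" for i
  define isR where "isR i = (t \<le> T1 i)" for i
  define e0 where "e0 i = evx (X i \<omega>0)" for i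
  define ph where "ph = phi p1 Q t"
  have fst_obs: "(Dobs T1 T0 C1 C0 Z i \<omega> \<and> Wobs T1 T0 C1 C0 Z i \<omega> = ennreal t) = (isD i \<and> evx (X i \<omega>))"
    and snd_obs: "(Wobs T1 T0 C1 C0 Z i \<omega> \<ge> ennreal t) = (isR i \<and> evx (X i \<omega>))"
    if i: "i < n" for i \<omega>
  proof -
    have T: "Tobs T1 T0 Z i \<omega> = T1 i" "0 \<le> T1 i" using H0 Tnonneg i by (auto simp: Tobs_def)
    have C: "ennreal t \<le> Cobs C1 C0 Z i \<omega> = evx (X i \<omega>)" by (simp add: Cobs_def evx_def X_def)
    note o = obs_aux[OF T(2) t, of "Cobs C1 C0 Z i \<omega>"]
    show "(Dobs T1 T0 C1 C0 Z i \<omega> \<and> Wobs T1 T0 C1 C0 Z i \<omega> = ennreal t) = (isD i \<and> evx (X i \<omega>))"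
      using o unfolding Dobs_def Wobs_def T(1) C isD_def by simp
    show "(Wobs T1 T0 C1 C0 Z i \<omega> \<ge> ennreal t) = (isR i \<and> evx (X i \<omega>))"
      using o unfolding Wobs_def T(1) C isR_def by simp
  qed
  have obs_eq: "(obs_ind T1 T0 C1 C0 Z t i \<omega> = obs_ind T1 T0 C1 C0 Z t i \<omega>0) = (isR i \<longrightarrow> evx (X i \<omega>) = e0 i)"
    if i: "i < n" for i \<omega>
    unfolding obs_ind_def prod_eq_iff fst_conv snd_conv fst_obs[OF i] snd_obs[OF i] e0_def isD_def isR_def
    by auto
  have DR: "\<forall>i. isD i \<longrightarrow> isR i" unfolding isD_def isR_def by simp
  have ab: "\<forall>i<n. qX i (True,True,True) + qX i (True,True,False) = ph * ((qX i (True,True,True) + qX i (True,True,False)) + (qX i (False,True,True) + qX i (False,False,True)))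
       \<and> qX i (False,True,True) + qX i (False,False,True) = (1 - ph) * ((qX i (True,True,True) + qX i (True,True,False)) + (qX i (False,True,True) + qX i (False,False,True)))"
  proof (intro allI impI)
    fix i assume i: "i < n"
    have Zs: "{\<omega>\<in>space M. Z i \<omega>} \<in> sets M"
      using Zmeas i unfolding pred_def[symmetric] by auto
    have pZ: "measure M {\<omega>\<in>space M. Z i \<omega>} = p1" using Zbern i by auto
    have pnZ: "measure M {\<omega>\<in>space M. \<not> Z i \<omega>} = 1 - p1"
    proof -
      have "{\<omega>\<in>space M. \<not> Z i \<omega>} = space M - {\<omega>\<in>space M. Z i \<omega>}" by auto
      then show ?thesis using prob_compl[OF Zs] pZ by simp
    qed
    have cm: "C1 i \<in> borel_measurable M" "C0 i \<in> borel_measurable M" using Cmeas i by auto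
    have fm: "(\<lambda>\<omega>. (C1 i \<omega>, C0 i \<omega>)) \<in> measurable M (borel \<Otimes>\<^sub>M borel)"
      using cm by measurable
    have Qd: "Q = distr M (borel \<Otimes>\<^sub>M borel) (\<lambda>\<omega>. (C1 i \<omega>, C0 i \<omega>))" using Cident i by auto
    have s1: "{x::ennreal \<times> ennreal. ennreal t \<le> fst x} \<in> sets (borel \<Otimes>\<^sub>M borel)"
    proof -
      have "Measurable.pred (borel \<Otimes>\<^sub>M borel) (\<lambda>x::ennreal \<times> ennreal. ennreal t \<le> fst x)" by measurable
      then show ?thesis unfolding pred_def by (simp add: space_pair_measure)
    qed
    have s0: "{x::ennreal \<times> ennreal. ennreal t \<le> snd x} \<in> sets (borel \<Otimes>\<^sub>M borel)"
    proof -
      have "Measurable.pred (borel \<Otimes>\<^sub>M borel) (\<lambda>x::ennreal \<times> ennreal. ennreal t \<le> snd x)" by measurable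
      then show ?thesis unfolding pred_def by (simp add: space_pair_measure)
    qed
    have g1: "G1 Q (ennreal t) = measure M {\<omega>\<in>space M. ennreal t \<le> C1 i \<omega>}"
      unfolding G1_def Qd using measure_distr[OF fm s1]
      by (simp add: space_pair_measure vimage_def Int_def conj_commute)
    have g0: "G0 Q (ennreal t) = measure M {\<omega>\<in>space M. ennreal t \<le> C0 i \<omega>}"
      unfolding G0_def Qd using measure_distr[OF fm s0]
      by (simp add: space_pair_measure vimage_def Int_def conj_commute)
    have a: "qX i (True,True,True) + qX i (True,True,False) = p1 * G1 Q (ennreal t)"
      using alpha_eq[OF i] pZ g1 by simp
    have b: "qX i (False,True,True) + qX i (False,False,True) = (1 - p1) * G0 Q (ennreal t)"
      using beta_eq[OF i] pnZ g0 by simp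
    have "0 \<le> p1 * G1 Q (ennreal t)" "0 \<le> (1 - p1) * G0 Q (ennreal t)"
      using p1 by (auto simp: G1_def G0_def)
    from phi_rel[OF this] show "qX i (True,True,True) + qX i (True,True,False) = ph * ((qX i (True,True,True) + qX i (True,True,False)) + (qX i (False,True,True) + qX i (False,False,True)))
       \<and> qX i (False,True,True) + qX i (False,False,True) = (1 - ph) * ((qX i (True,True,True) + qX i (True,True,False)) + (qX i (False,True,True) + qX i (False,False,True)))"
      unfolding a b ph_def phi_def .
  qed
  note MI = main_ind[OF DR ab order_refl, rule_format, where A=A and B=B]
  have ev1: "{\<omega> \<in> space M.
            (\<forall>i<n. obs_ind T1 T0 C1 C0 Z t i \<omega> = obs_ind T1 T0 C1 C0 Z t i \<omega>0)
            \<and> int (Dbar1 n T1 T0 C1 C0 Z t \<omega>) = A \<and> int (Nbar1 n T1 T0 C1 C0 Z t \<omega>) = B}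
     = {\<omega>\<in>space M. (\<forall>i<n. isR i \<longrightarrow> evx (X i \<omega>) = e0 i)
        \<and> int (card {i\<in>{..<n}. fst (X i \<omega>) \<and> isD i \<and> evx (X i \<omega>)}) = A
        \<and> int (card {i\<in>{..<n}. fst (X i \<omega>) \<and> isR i \<and> evx (X i \<omega>)}) = B}"
  proof -
    have "Dbar1 n T1 T0 C1 C0 Z t \<omega> = card {i\<in>{..<n}. fst (X i \<omega>) \<and> isD i \<and> evx (X i \<omega>)}" for \<omega>
      unfolding Dbar1_def by (rule arg_cong[where f=card], rule Collect_cong) (use fst_obs in \<open>auto simp: X_def\<close>)
    moreover have "Nbar1 n T1 T0 C1 C0 Z t \<omega> = card {i\<in>{..<n}. fst (X i \<omega>) \<and> isR i \<and> evx (X i \<omega>)}" for \<omega>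
      unfolding Nbar1_def by (rule arg_cong[where f=card], rule Collect_cong) (use snd_obs in \<open>auto simp: X_def\<close>)
    ultimately show ?thesis using obs_eq by auto
  qed
  have ev2: "{\<omega> \<in> space M. \<forall>i<n. obs_ind T1 T0 C1 C0 Z t i \<omega> = obs_ind T1 T0 C1 C0 Z t i \<omega>0}
     = {\<omega>\<in>space M. \<forall>i<n. isR i \<longrightarrow> evx (X i \<omega>) = e0 i}"
    using obs_eq by auto
  have d0: "Dbar n T1 T0 C1 C0 Z t \<omega>0 = card {i\<in>{..<n}. isD i \<and> e0 i}"
    unfolding Dbar_def e0_def by (rule arg_cong[where f=card], rule Collect_cong) (use fst_obs in auto)
  have n0: "Nbar n T1 T0 C1 C0 Z t \<omega>0 = card {i\<in>{..<n}. isR i \<and> e0 i}"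
    unfolding Nbar_def e0_def by (rule arg_cong[where f=card], rule Collect_cong) (use snd_obs in auto)
  show ?thesis unfolding ev1 ev2 d0 n0 MI coef_def ph_def ..
qed


end
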